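(* Assume (C1) and (C2). For any $u\in\mathcal{M}$, $$I(u)=\max_{s,t\ge0}I(su^++tu^-).$$
   Context: Fix real numbers $p,q,r$ with $1<p<q$, $\frac p2$ a positive integer, and $r\ge1$, and functions $a,b,c:\mathbb{Z}\to(0,+\infty)$. Conditions: - (C1) There is $b_0>0$ with $b(n)\ge b_0$ for all $n$ and $b(n)\to+\infty$ as $|n|\to\infty$. - (C2) There is $c_0>0$ with $c(n)\le c_0$ for all $n$ and $\sum_n c(n)<+\infty$. Notation for a real sequence $u=(u(n))_{n\in\mathbb{Z}}$: $\Delta u(n)=u(n+1)-u(n)$, $u^+(n)=\max\{u(n),0\}$, $u^-(n)=\min\{u(n),0\}$. Spaces: - $E$ is the set of real sequences $u$ with $\|u\|:=\big(\sum_n[a(n)|\Delta u(n)|^p+b(n)|u(n)|^p]\big)^{1/p}<\infty$. - $\mathcal{D}=\{u\in E:\sum_n c(n)|u(n)|^q\ln|u(n)|^r<+\infty\}$, where terms with $u(n)=0$ are read as $0$. For $u,v\in\mathcal{D}$: - $I(u)=\frac1p\|u\|^p+\frac{r}{q^2}\sum_n c(n)|u(n)|^q-\frac1q\sum_n c(n)|u(n)|^q\ln|u(n)|^r$. - $\langle I'(u),v\rangle=\sum_n[a(n)|\Delta u(n)|^{p-2}\Delta u(n)\Delta v(n)+b(n)|u(n)|^{p-2}u(n)v(n)]-\sum_n c(n)|u(n)|^{q-2}u(n)v(n)\ln|u(n)|^r$. $\mathcal{M}=\{u\in\mathcal{D}:u^+\ne0,\ u^-\neq0,\ \langle I'(u),u^+\rangle=0,\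 \langle I'(u),u^-\rangle=0\}$. *)

theory Defs
  imports "HOL-Analysis.Analysis"
begin

definition fdiff :: "(int \<Rightarrow> real) \<Rightarrow> int \<Rightarrow> real" where
  "fdiff u n = u (n + 1) - u n"

definition pos_part :: "(int \<Rightarrow> real) \<Rightarrow> int \<Rightarrow> real" where
  "pos_part u n = max (u n) 0"

definition neg_part :: "(int \<Rightarrow> real) \<Rightarrow> int \<Rightarrow> real" where
  "neg_part u n = min (u n) 0"

definition E_term :: "real \<Rightarrow> (int \<Rightarrow> real) \<Rightarrow> (int \<Rightarrow> real) \<Rightarrow> (int \<Rightarrow> real) \<Rightarrow> int \<Rightarrow> real" where
  "E_term p a b u n = a n * \<bar>fdiff u n\<bar> powr p + b n * \<bar>u n\<bar> powr p"

definition spaceE :: "real \<Rightarrow> (int \<Rightarrow> real) \<Rightarrow> (int \<Rightarrow> real) \<Rightarrow> (int \<Rightarrow> real) set" where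
  "spaceE p a b = {u. E_term p a b u summable_on UNIV}"

definition normE :: "real \<Rightarrow> (int \<Rightarrow> real) \<Rightarrow> (int \<Rightarrow> real) \<Rightarrow> (int \<Rightarrow> real) \<Rightarrow> real" where
  "normE p a b u = (\<Sum>\<^sub>\<infinity>n. E_term p a b u n) powr (1 / p)"

text \<open>Logarithmic term c(n) |u(n)|^q ln |u(n)|^r (equals 0 when u(n) = 0, since ln 0 = 0 in Isabelle).\<close>
definition log_term :: "real \<Rightarrow> real \<Rightarrow> (int \<Rightarrow> real) \<Rightarrow> (int \<Rightarrow> real) \<Rightarrow> int \<Rightarrow> real" where
  "log_term q r c u n = c n * \<bar>u n\<bar> powr q * ln (\<bar>u n\<bar> powr r)"

definition spaceD :: "real \<Rightarrow> real \<Rightarrow> real \<Rightarrow> (int \<Rightarrow> real) \<Rightarrow> (int \<Rightarrow> real) \<Rightarrow> (int \<Rightarrow> real) \<Rightarrow> (int \<Rightarrow> real) set" where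
  "spaceD p q r a b c = {u \<in> spaceE p a b. log_term q r c u summable_on UNIV}"

definition functional_I :: "real \<Rightarrow> real \<Rightarrow> real \<Rightarrow> (int \<Rightarrow> real) \<Rightarrow> (int \<Rightarrow> real) \<Rightarrow> (int \<Rightarrow> real) \<Rightarrow> (int \<Rightarrow> real) \<Rightarrow> real" where
  "functional_I p q r a b c u =
     (1 / p) * normE p a b u powr p
     + (r / q\<^sup>2) * (\<Sum>\<^sub>\<infinity>n. c n * \<bar>u n\<bar> powr q)
     - (1 / q) * (\<Sum>\<^sub>\<infinity>n. log_term q r c u n)"

definition deriv_I :: "real \<Rightarrow> real \<Rightarrow> real \<Rightarrow> (int \<Rightarrow> real) \<Rightarrow> (int \<Rightarrow> real) \<Rightarrow> (int \<Rightarrow> real) \<Rightarrow> (int \<Rightarrow> real) \<Rightarrow> (int \<Rightarrow> real) \<Rightarrow> real" where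
  "deriv_I p q r a b c u v =
     (\<Sum>\<^sub>\<infinity>n. a n * \<bar>fdiff u n\<bar> powr (p - 2) * fdiff u n * fdiff v n
              + b n * \<bar>u n\<bar> powr (p - 2) * u n * v n)
     - (\<Sum>\<^sub>\<infinity>n. c n * \<bar>u n\<bar> powr (q - 2) * u n * v n * ln (\<bar>u n\<bar> powr r))"

definition nehari_M :: "real \<Rightarrow> real \<Rightarrow> real \<Rightarrow> (int \<Rightarrow> real) \<Rightarrow> (int \<Rightarrow> real) \<Rightarrow> (int \<Rightarrow> real) \<Rightarrow> (int \<Rightarrow> real) set" where
  "nehari_M p q r a b c = {u \<in> spaceD p q r a b c.
      pos_part u \<noteq> (\<lambda>_. 0) \<and> neg_part u \<noteq> (\<lambda>_. 0) \<and>
      deriv_I p q r a b c u (pos_part u) = 0 \<and>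
      deriv_I p q r a b c u (neg_part u) = 0}"

end

theory Submission
  imports Defs
begin


lemma hlem:
  fixes q s :: real assumes "q > 0" "s \<ge> 0"
  shows "0 \<le> 1 - s powr q + q * s powr q * ln s"
proof (cases "s = 0")
  case True then show ?thesis by simp
next
  case False
  then have sp: "s > 0" using assms by simp
  define \<tau> where "\<tau> = s powr q"
  have tp: "\<tau> > 0" using sp by (simp add: \<tau>_def)
  have lt: "ln \<tau> = q * ln s" using sp by (simp add: \<tau>_def)
  have "ln (1/\<tau>) \<le> 1/\<tau> - 1" using tp by (intro ln_le_minus_one) simp
  then have "- ln \<tau> \<le> 1/\<tau> - 1" using tp by (simp add: ln_div)
  then have "\<tau> * (- ln \<tau>) \<le> \<tau> * (1/\<tau> - 1)" using tp by (intro mult_left_mono) auto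
  then have "- \<tau> * ln \<tau> \<le> 1 - \<tau>" using tp by (simp add: algebra_simps)
  then show ?thesis using lt by (simp add: \<tau>_def algebra_simps)
qed

lemma klem:
  fixes p q s :: real assumes "1 < p" "p < q" "s \<ge> 0"
  shows "s powr p / p \<le> s powr q / q + 1/p - 1/q"
proof -
  have y: "(s powr p) * 1 \<le> (s powr p) powr (q/p) / (q/p) + 1 powr (q/(q-p)) / (q/(q-p))"
    using assms by (intro Youngs_inequality) (auto simp: field_simps)
  have "(s powr p) powr (q/p) = s powr q" using assms by (simp add: powr_powr)
  with y have "s powr p \<le> s powr q * (p/q) + (q-p)/q" using assms by simp
  then have "s powr p / p \<le> (s powr q * (p/q) + (q-p)/q) / p" using assms by (intro divide_right_mono) auto
  also have "\<dots> = s powr q / q + 1/p - 1/q" using assms by (simp add: field_simps)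
  finally show ?thesis .
qed

lemma convlem:
  fixes p l s t :: real assumes "p \<ge> 1" "0 \<le> l" "l \<le> 1" "s \<ge> 0" "t \<ge> 0"
  shows "(l * s + (1 - l) * t) powr p \<le> l * s powr p + (1 - l) * t powr p"
proof -
  have pw: "z powr p \<le> z" if "0 \<le> z" "z \<le> 1" for z :: real
  proof (cases "z = 0")
    case False
    then have "z powr p \<le> z powr 1" using that assms by (intro powr_mono') auto
    then show ?thesis using that by simp
  qed simp
  show ?thesis
  proof (cases "s = 0 \<or> t = 0")
    case True
    then show ?thesis
    proof
      assume s0: "s = 0"
      have "((1 - l) * t) powr p = (1 - l) powr p * t powr p" using assms by (simp add: powr_mult)
      also have "\<dots> \<le> (1 - l) * t powr p" using assms pw[of "1-l"] by (intro mult_right_mono) auto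
      finally show ?thesis using s0 by simp
    next
      assume t0: "t = 0"
      have "(l * s) powr p = l powr p * s powr p" using assms by (simp add: powr_mult)
      also have "\<dots> \<le> l * s powr p" using assms pw[of "l"] by (intro mult_right_mono) auto
      finally show ?thesis using t0 by simp
    qed
  next
    case False
    then have "s > 0" "t > 0" using assms by auto
    from convex_onD[OF powr_convex[OF assms(1)], of "1 - l" s t] this assms
    show ?thesis by (simp add: algebra_simps)
  qed
qed

lemma lin_aux:
  fixes A l S T P q :: real
  assumes "A \<le> l*(S/q + P - 1/q) + (1 - l)*(T/q + P - 1/q)"
  shows "0 \<le> P - A - (l*((1 - S)/q) + (1 - l)*((1 - T)/q))"
proof -
  have e: "(1-S)/q = 1/q - S/q" "(1-T)/q = 1/q - T/q" by (simp_all add: diff_divide_distrib)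
  show ?thesis using assms unfolding e ring_distribs by linarith
qed

lemma E1:
  fixes p q s t X Y :: real assumes "1 < p" "p < q" "s \<ge> 0" "t \<ge> 0" "X \<ge> 0" "Y \<ge> 0"
  shows "0 \<le> (X+Y) powr p / p - (s*X+t*Y) powr p / p
     - (X+Y) powr (p-2) * (X+Y) * ((1 - s powr q)/q * X + (1 - t powr q)/q * Y)"
proof (cases "X + Y = 0")
  case True
  then have "X = 0" "Y = 0" using assms by auto
  then show ?thesis by simp
next
  case False
  define Z where "Z = X + Y"
  have Zp: "Z > 0" using False assms by (simp add: Z_def)
  define l where "l = X / Z"
  have X: "X = l * Z" and Y: "Y = (1 - l) * Z" using Zp by (auto simp: l_def Z_def field_simps)
  have l01: "0 \<le> l" "l \<le> 1" using assms Zp by (auto simp: l_def Z_def)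
  have e1: "(s * X + t * Y) powr p = Z powr p * (l * s + (1 - l) * t) powr p"
  proof -
    have "s*X+t*Y = Z * (l * s + (1 - l)*t)" by (simp add: X Y algebra_simps)
    then show ?thesis using Zp l01 assms by (simp add: powr_mult)
  qed
  have e2: "Z powr (p-2) * Z = Z powr p / Z"
  proof -
    have "Z powr (p-2) = Z powr p / Z powr 2" by (simp add: powr_diff)
    moreover have "Z powr 2 = Z * Z" using Zp by (simp add: powr_realpow[of Z 2, simplified] power2_eq_square)
    ultimately show ?thesis using Zp by (simp add: field_simps)
  qed
  have cv: "(l * s + (1 - l)*t) powr p \<le> l * s powr p + (1 - l) * t powr p"
    using convlem[of p l s t] assms l01 by simp
  have ks: "s powr p / p \<le> s powr q / q + 1/p - 1/q" and kt: "t powr p / p \<le> t powr q / q + 1/p - 1/q"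
    using klem assms by auto
  have main: "0 \<le> 1/p - (l * s + (1 - l)*t) powr p / p - (l * ((1 - s powr q)/q) + (1 - l) * ((1 - t powr q)/q))"
  proof -
    have "(l * s + (1 - l)*t) powr p / p \<le> (l * s powr p + (1 - l) * t powr p) / p"
      using cv assms by (intro divide_right_mono) auto
    also have "\<dots> = l * (s powr p / p) + (1 - l) * (t powr p / p)" using assms by (simp add: field_simps)
    also have "\<dots> \<le> l * (s powr q / q + 1/p - 1/q) + (1 - l) * (t powr q / q + 1/p - 1/q)"
      using l01 ks kt by (intro add_mono mult_left_mono) auto
    finally have F: "(l * s + (1 - l) * t) powr p / p \<le> l * (s powr q / q + 1/p - 1/q) + (1 - l) * (t powr q / q + 1/p - 1/q)" .
    then show ?thesis by (rule lin_aux)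
  qed
  have "(X+Y) powr p / p - (s*X+t*Y) powr p / p
     - (X+Y) powr (p-2) * (X+Y) * ((1 - s powr q)/q * X + (1 - t powr q)/q * Y)
     = Z powr p * (1/p - (l * s + (1 - l)*t) powr p / p - (l * ((1 - s powr q)/q) + (1 - l) * ((1 - t powr q)/q)))"
    unfolding e1 Z_def[symmetric] e2 using Zp by (simp add: X Y field_simps)
  then show ?thesis using main Zp by simp
qed

lemma E0:
  fixes p q s t X Y :: real assumes "1 < p" "p < q" "s \<ge> 0" "t \<ge> 0" "X * Y \<ge> 0"
  shows "0 \<le> \<bar>X+Y\<bar> powr p / p - \<bar>s*X+t*Y\<bar> powr p / p
     - \<bar>X+Y\<bar> powr (p-2) * (X+Y) * ((1 - s powr q)/q * X + (1 - t powr q)/q * Y)"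
proof (cases "X \<ge> 0 \<and> Y \<ge> 0")
  case True
  then show ?thesis using E1[of p q s t X Y] assms by simp
next
  case False
  then have "X \<le> 0" "Y \<le> 0" using assms by (auto simp: zero_le_mult_iff)
  then have a1: "\<bar>X+Y\<bar> = (-X) + (-Y)" by simp
  have "s*X \<le> 0" "t*Y \<le> 0" using assms \<open>X \<le> 0\<close> \<open>Y \<le> 0\<close> by (auto simp: mult_nonneg_nonpos)
  then have a2: "\<bar>s*X+t*Y\<bar> = s*(-X) + t*(-Y)" by simp
  have "(X+Y) * ((1 - s powr q)/q * X + (1 - t powr q)/q * Y) = ((-X)+(-Y)) * ((1 - s powr q)/q * (-X) + (1 - t powr q)/q * (-Y))"
    by (simp add: algebra_simps)
  then show ?thesis unfolding a1 a2 using E1[of p q s t "-X" "-Y"] assms \<open>X \<le> 0\<close> \<open>Y \<le> 0\<close>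
    by (simp add: mult.assoc)
qed

lemma sq_aux:
  fixes x q :: real assumes "x \<noteq> 0"
  shows "\<bar>x\<bar> powr (q-2) * x * x = \<bar>x\<bar> powr q"
proof -
  have "\<bar>x\<bar> powr (q-2) = \<bar>x\<bar> powr q / \<bar>x\<bar> powr 2" by (simp add: powr_diff)
  moreover have "\<bar>x\<bar> powr 2 = x * x" using assms
    by (simp add: powr_realpow[of "\<bar>x\<bar>" 2, simplified] power2_eq_square)
  ultimately show ?thesis using assms by simp
qed

lemma Ccore:
  fixes q r x \<sigma> :: real assumes "x \<noteq> 0" "\<sigma> \<ge> 0" "q > 0" "r \<ge> 0"
  shows "0 \<le> r/q\<^sup>2 * \<bar>x\<bar> powr q - \<bar>x\<bar> powr q * ln(\<bar>x\<bar> powr r)/q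
     - (r/q\<^sup>2 * \<bar>\<sigma>*x\<bar> powr q - \<bar>\<sigma>*x\<bar> powr q * ln(\<bar>\<sigma>*x\<bar> powr r)/q)
     + (1 - \<sigma> powr q)/q * (\<bar>x\<bar> powr q * ln(\<bar>x\<bar> powr r))"
proof (cases "\<sigma> = 0")
  case True then show ?thesis using assms by simp
next
  case False
  then have sp: "\<sigma> > 0" using assms by simp
  have h: "0 \<le> 1 - \<sigma> powr q + q * \<sigma> powr q * ln \<sigma>" using hlem assms by simp
  have a: "\<bar>\<sigma>*x\<bar> powr q = \<sigma> powr q * \<bar>x\<bar> powr q" using sp by (simp add: abs_mult powr_mult)
  have l: "ln(\<bar>\<sigma>*x\<bar> powr r) = r * ln \<sigma> + r * ln \<bar>x\<bar>" using sp assms by (simp add: abs_mult ln_mult algebra_simps)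
  have "r/q\<^sup>2 * \<bar>x\<bar> powr q - \<bar>x\<bar> powr q * ln(\<bar>x\<bar> powr r)/q
     - (r/q\<^sup>2 * \<bar>\<sigma>*x\<bar> powr q - \<bar>\<sigma>*x\<bar> powr q * ln(\<bar>\<sigma>*x\<bar> powr r)/q)
     + (1 - \<sigma> powr q)/q * (\<bar>x\<bar> powr q * ln(\<bar>x\<bar> powr r))
     = (r/q\<^sup>2 * \<bar>x\<bar> powr q) * (1 - \<sigma> powr q + q * \<sigma> powr q * ln \<sigma>)"
    unfolding a l using assms by (simp add: field_simps power2_eq_square)
  then show ?thesis using h assms by simp
qed

lemma siteC:
  fixes q r x s t :: real assumes "s \<ge> 0" "t \<ge> 0" "q > 0" "r \<ge> 0"
  shows "0 \<le> r/q\<^sup>2 * \<bar>x\<bar> powr q - \<bar>x\<bar> powr q * ln(\<bar>x\<bar> powr r)/q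
     - (r/q\<^sup>2 * \<bar>s * max x 0 + t * min x 0\<bar> powr q - \<bar>s * max x 0 + t * min x 0\<bar> powr q * ln(\<bar>s * max x 0 + t * min x 0\<bar> powr r)/q)
     + (1 - s powr q)/q * (\<bar>x\<bar> powr (q-2) * x * max x 0 * ln(\<bar>x\<bar> powr r))
     + (1 - t powr q)/q * (\<bar>x\<bar> powr (q-2) * x * min x 0 * ln(\<bar>x\<bar> powr r))"
proof -
  consider "x > 0" | "x < 0" | "x = 0" by linarith
  then show ?thesis
  proof cases
    case 1
    then have "max x 0 = x" "min x 0 = 0" by auto
    then show ?thesis using Ccore[of x s q r] assms 1 sq_aux[of x q] by (simp add: mult.assoc)
  next
    case 2
    then have "max x 0 = 0" "min x 0 = x" by auto
    then show ?thesis using Ccore[of x t q r] assms 2 sq_aux[of x q] by (simp add: mult.assoc)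
  qed simp
qed

lemma pt:
  fixes p q r s t x y an bn cn :: real
  assumes "1 < p" "p < q" "r \<ge> 0" "s \<ge> 0" "t \<ge> 0" "an \<ge> 0" "bn \<ge> 0" "cn \<ge> 0"
  defines "wx \<equiv> s * max x 0 + t * min x 0" and "wy \<equiv> s * max y 0 + t * min y 0"
  shows "0 \<le> (an * \<bar>y - x\<bar> powr p + bn * \<bar>x\<bar> powr p) / p + r/q\<^sup>2 * (cn * \<bar>x\<bar> powr q) - (cn * \<bar>x\<bar> powr q * ln(\<bar>x\<bar> powr r)) / q
    - ((an * \<bar>wy - wx\<bar> powr p + bn * \<bar>wx\<bar> powr p) / p + r/q\<^sup>2 * (cn * \<bar>wx\<bar> powr q) - (cn * \<bar>wx\<bar> powr q * ln(\<bar>wx\<bar> powr r)) / q)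
    - (1 - s powr q)/q * ((an * \<bar>y - x\<bar> powr (p-2) * (y - x) * (max y 0 - max x 0) + bn * \<bar>x\<bar> powr (p-2) * x * max x 0)
         - cn * \<bar>x\<bar> powr (q-2) * x * max x 0 * ln(\<bar>x\<bar> powr r))
    - (1 - t powr q)/q * ((an * \<bar>y - x\<bar> powr (p-2) * (y - x) * (min y 0 - min x 0) + bn * \<bar>x\<bar> powr (p-2) * x * min x 0)
         - cn * \<bar>x\<bar> powr (q-2) * x * min x 0 * ln(\<bar>x\<bar> powr r))"
    (is "0 \<le> ?G")
proof -
  define As where "As = (1 - s powr q)/q"
  define At where "At = (1 - t powr q)/q"
  define X where "X = max y 0 - max x 0"
  define Y where "Y = min y 0 - min x 0"
  have XY: "X * Y \<ge> 0" unfolding X_def Y_def by (cases "x \<le> 0"; cases "y \<le> 0") (auto simp: zero_le_mult_iff mult_nonneg_nonpos mult_nonpos_nonneg)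
  have hE: "0 \<le> \<bar>y - x\<bar> powr p / p - \<bar>wy - wx\<bar> powr p / p - \<bar>y - x\<bar> powr (p-2) * (y - x) * (As * X + At * Y)"
  proof -
    have "y - x = X + Y" "wy - wx = s * X + t * Y" unfolding X_def Y_def wx_def wy_def
      by (auto simp: algebra_simps)
    then show ?thesis using E0[of p q s t X Y] assms XY unfolding As_def At_def by simp
  qed
  have hB: "0 \<le> \<bar>x\<bar> powr p / p - \<bar>wx\<bar> powr p / p - \<bar>x\<bar> powr (p-2) * x * (As * max x 0 + At * min x 0)"
  proof -
    have e: "max x 0 + min x 0 = x" by auto
    have m: "max x 0 * min x 0 \<ge> 0" by (cases "x \<ge> 0") auto
    show ?thesis using E0[OF assms(1,2,4,5) m] unfolding As_def At_def wx_def e .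
  qed
  have hC: "0 \<le> r/q\<^sup>2 * \<bar>x\<bar> powr q - \<bar>x\<bar> powr q * ln(\<bar>x\<bar> powr r)/q
     - (r/q\<^sup>2 * \<bar>wx\<bar> powr q - \<bar>wx\<bar> powr q * ln(\<bar>wx\<bar> powr r)/q)
     + As * (\<bar>x\<bar> powr (q-2) * x * max x 0 * ln(\<bar>x\<bar> powr r))
     + At * (\<bar>x\<bar> powr (q-2) * x * min x 0 * ln(\<bar>x\<bar> powr r))"
    unfolding As_def At_def wx_def using siteC[of s t q r x] assms by simp
  have "?G = an * (\<bar>y - x\<bar> powr p / p - \<bar>wy - wx\<bar> powr p / p - \<bar>y - x\<bar> powr (p-2) * (y - x) * (As * X + At * Y))
     + bn * (\<bar>x\<bar> powr p / p - \<bar>wx\<bar> powr p / p - \<bar>x\<bar> powr (p-2) * x * (As * max x 0 + At * min x 0))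
     + cn * (r/q\<^sup>2 * \<bar>x\<bar> powr q - \<bar>x\<bar> powr q * ln(\<bar>x\<bar> powr r)/q
     - (r/q\<^sup>2 * \<bar>wx\<bar> powr q - \<bar>wx\<bar> powr q * ln(\<bar>wx\<bar> powr r)/q)
     + As * (\<bar>x\<bar> powr (q-2) * x * max x 0 * ln(\<bar>x\<bar> powr r))
     + At * (\<bar>x\<bar> powr (q-2) * x * min x 0 * ln(\<bar>x\<bar> powr r)))"
    unfolding As_def[symmetric] At_def[symmetric] X_def[symmetric] Y_def[symmetric]
    by (simp del: ln_powr add: algebra_simps add_divide_distrib diff_divide_distrib)
  also have "\<dots> \<ge> 0" using mult_nonneg_nonneg[OF assms(6) hE] mult_nonneg_nonneg[OF assms(7) hB] mult_nonneg_nonneg[OF assms(8) hC]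
    by linarith
  finally show ?thesis .
qed

lemma real_summable_comp:
  fixes f g :: "'a \<Rightarrow> real"
  assumes "f summable_on A" "\<And>x. x \<in> A \<Longrightarrow> \<bar>g x\<bar> \<le> f x"
  shows "g summable_on A"
proof -
  have "(\<lambda>x. norm (f x)) summable_on A" using assms(1) summable_on_iff_abs_summable_on_real by blast
  then have "(\<lambda>x. norm (g x)) summable_on A"
    by (rule Infinite_Sum.abs_summable_on_comparison_test) (use assms(2) in force)
  then show ?thesis using summable_on_iff_abs_summable_on_real by blast
qed

lemma abs_summable_real:
  fixes f :: "'a \<Rightarrow> real"
  assumes "f summable_on A" shows "(\<lambda>x. \<bar>f x\<bar>) summable_on A"
  using assms summable_on_iff_abs_summable_on_real by auto

lemma term_le_infsum:
  fixes f :: "'a \<Rightarrow> real"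
  assumes "f summable_on UNIV" "\<And>x. f x \<ge> 0"
  shows "f n \<le> infsum f UNIV"
proof -
  have "infsum f {n} \<le> infsum f UNIV"
    by (rule infsum_mono_neutral) (use assms in auto)
  then show ?thesis by simp
qed

lemma has_sum_diff:
  fixes f g :: "'a \<Rightarrow> real"
  assumes "(f has_sum a) A" "(g has_sum b) A"
  shows "((\<lambda>x. f x - g x) has_sum (a - b)) A"
proof -
  have "((\<lambda>x. - g x) has_sum (- b)) A" using assms(2) by (simp add: has_sum_uminus)
  from has_sum_add[OF assms(1) this] show ?thesis by simp
qed

lemma abs_same_sign: fixes X Y :: real assumes "X * Y \<ge> 0" shows "\<bar>X\<bar> + \<bar>Y\<bar> = \<bar>X + Y\<bar>"
  using assms by (cases "X \<ge> 0"; cases "Y \<ge> 0") (auto simp: zero_le_mult_iff)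

lemma dterm_bound:
  fixes z X p :: real assumes "\<bar>X\<bar> \<le> \<bar>z\<bar>"
  shows "\<bar>\<bar>z\<bar> powr (p-2) * z * X\<bar> \<le> \<bar>z\<bar> powr p"
proof (cases "z = 0")
  case True then show ?thesis using assms by simp
next
  case False
  have "\<bar>\<bar>z\<bar> powr (p-2) * z * X\<bar> = \<bar>z\<bar> powr (p-2) * \<bar>z\<bar> * \<bar>X\<bar>" by (simp add: abs_mult)
  also have "\<dots> \<le> \<bar>z\<bar> powr (p-2) * \<bar>z\<bar> * \<bar>z\<bar>" using assms by (intro mult_left_mono) auto
  also have "\<dots> = \<bar>z\<bar> powr (p-2) * z * z" by (simp add: mult.assoc abs_mult[symmetric])
  also have "\<dots> = \<bar>z\<bar> powr p" using sq_aux[OF False] .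
  finally show ?thesis .
qed



lemma main_ineq:
  fixes p q r s t :: real and a b c u :: "int \<Rightarrow> real"
  assumes p1: "1 < p" and pq: "p < q" and r1: "r \<ge> 1"
    and apos: "\<And>n. a n > 0" and bpos: "\<And>n. b n > 0" and cpos: "\<And>n. c n > 0"
    and b0: "b0 > 0" "\<And>n. b n \<ge> b0"
    and csum: "c summable_on UNIV"
    and uM: "u \<in> nehari_M p q r a b c"
    and s0: "s \<ge> 0" and t0: "t \<ge> 0"
  shows "functional_I p q r a b c (\<lambda>n. s * pos_part u n + t * neg_part u n) \<le> functional_I p q r a b c u"
proof -
  define w where "w = (\<lambda>n. s * pos_part u n + t * neg_part u n)"
  have uE: "E_term p a b u summable_on UNIV" and uL: "log_term q r c u summable_on UNIV"
    and d1: "deriv_I p q r a b c u (pos_part u) = 0" and d2: "deriv_I p q r a b c u (neg_part u) = 0"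
    using uM by (auto simp: nehari_M_def spaceD_def spaceE_def)
  have Enn: "E_term p a b v n \<ge> 0" for v n
    using apos[of n] bpos[of n] by (simp add: E_term_def)
  have normE: "normE p a b v powr p = infsum (E_term p a b v) UNIV" for v
  proof -
    have "infsum (E_term p a b v) UNIV \<ge> 0" using Enn by (simp add: infsum_nonneg)
    then show ?thesis using p1 by (simp add: normE_def powr_powr)
  qed
  define Mx where "Mx = max s t"
  have Mx0: "Mx \<ge> 0" using s0 by (simp add: Mx_def)
  define SE where "SE = infsum (E_term p a b u) UNIV"
  define M where "M = (SE / b0) powr (1/p)"
  have ubnd: "\<bar>u n\<bar> \<le> M" for n
  proof -
    have "b0 * \<bar>u n\<bar> powr p \<le> b n * \<bar>u n\<bar> powr p" using b0 by (intro mult_right_mono) auto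
    also have "\<dots> \<le> E_term p a b u n" using apos[of n] by (simp add: E_term_def)
    also have "\<dots> \<le> SE" unfolding SE_def using term_le_infsum[OF uE Enn] .
    finally have "\<bar>u n\<bar> powr p \<le> SE / b0" using b0 by (simp add: field_simps)
    then have "(\<bar>u n\<bar> powr p) powr (1/p) \<le> (SE / b0) powr (1/p)" using p1 by (intro powr_mono2) auto
    then show ?thesis using p1 by (simp add: powr_powr M_def)
  qed
  define Cu where "Cu = (\<lambda>n. c n * \<bar>u n\<bar> powr q)"
  have Cunn: "Cu n \<ge> 0" for n using cpos[of n] by (simp add: Cu_def)
  have Cus: "Cu summable_on UNIV"
  proof (rule real_summable_comp)
    show "(\<lambda>n. M powr q * c n) summable_on UNIV" using csum by (rule summable_on_cmult_right)
    fix n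
    have "\<bar>u n\<bar> powr q \<le> M powr q" using ubnd[of n] pq p1 by (intro powr_mono2) auto
    then show "\<bar>Cu n\<bar> \<le> M powr q * c n" using cpos[of n] by (simp add: Cu_def abs_mult mult.commute mult_left_mono)
  qed
  define \<sigma> where "\<sigma> = (\<lambda>n. if u n \<ge> 0 then s else t)"
  have \<sigma>0: "\<sigma> n \<ge> 0" "\<sigma> n \<le> Mx" for n using s0 t0 by (auto simp: \<sigma>_def Mx_def)
  have wsig: "w n = \<sigma> n * u n" for n by (auto simp: w_def \<sigma>_def pos_part_def neg_part_def)
  have logsc: "c n * \<bar>w n\<bar> powr q * ln(\<bar>w n\<bar> powr r) = \<sigma> n powr q * r * ln (\<sigma> n) * Cu n + \<sigma> n powr q * log_term q r c u n" for n
  proof (cases "\<sigma> n = 0 \<or> u n = 0")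
    case True then show ?thesis by (auto simp: wsig log_term_def Cu_def)
  next
    case False
    then have "\<sigma> n > 0" "\<bar>u n\<bar> > 0" using \<sigma>0[of n] by auto
    then have a: "\<bar>w n\<bar> powr q = \<sigma> n powr q * \<bar>u n\<bar> powr q"
      and l: "ln \<bar>w n\<bar> = ln(\<sigma> n) + ln \<bar>u n\<bar>"
      by (simp_all add: wsig abs_mult powr_mult ln_mult)
    show ?thesis unfolding log_term_def Cu_def ln_powr a l by (simp add: algebra_simps)
  qed
  define K1 where "K1 = \<bar>s powr q * r * ln s\<bar> + \<bar>t powr q * r * ln t\<bar>"
  have Lws: "log_term q r c w summable_on UNIV"
  proof (rule real_summable_comp)
    show "(\<lambda>n. K1 * Cu n + Mx powr q * \<bar>log_term q r c u n\<bar>) summable_on UNIV"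
      by (intro summable_on_add summable_on_cmult_right Cus abs_summable_real uL)
    fix n
    have k: "\<bar>\<sigma> n powr q * r * ln (\<sigma> n)\<bar> \<le> K1" by (simp add: \<sigma>_def K1_def)
    have m: "\<sigma> n powr q \<le> Mx powr q" using \<sigma>0[of n] pq p1 by (intro powr_mono2) auto
    have "\<bar>log_term q r c w n\<bar> \<le> \<bar>\<sigma> n powr q * r * ln (\<sigma> n)\<bar> * Cu n + \<sigma> n powr q * \<bar>log_term q r c u n\<bar>"
      unfolding log_term_def[of q r c w] logsc
    proof -
      let ?A = "\<sigma> n powr q * r * ln (\<sigma> n)" and ?B = "\<sigma> n powr q" and ?L = "log_term q r c u n"
      have "\<bar>?A * Cu n + ?B * ?L\<bar> \<le> \<bar>?A * Cu n\<bar> + \<bar>?B * ?L\<bar>" by (rule abs_triangle_ineq)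
      also have "\<bar>?A * Cu n\<bar> = \<bar>?A\<bar> * Cu n" using Cunn[of n] by (simp add: abs_mult)
      also have "\<bar>?B * ?L\<bar> = ?B * \<bar>?L\<bar>" by (simp add: abs_mult)
      finally show "\<bar>?A * Cu n + ?B * ?L\<bar> \<le> \<bar>?A\<bar> * Cu n + ?B * \<bar>?L\<bar>" .
    qed
    also have "\<dots> \<le> K1 * Cu n + Mx powr q * \<bar>log_term q r c u n\<bar>"
      using k m Cunn[of n] by (intro add_mono mult_right_mono) auto
    finally show "\<bar>log_term q r c w n\<bar> \<le> K1 * Cu n + Mx powr q * \<bar>log_term q r c u n\<bar>" .
  qed
  define Cw where "Cw = (\<lambda>n. c n * \<bar>w n\<bar> powr q)"
  have Cws: "Cw summable_on UNIV"
  proof (rule real_summable_comp)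
    show "(\<lambda>n. Mx powr q * Cu n) summable_on UNIV" by (intro summable_on_cmult_right Cus)
    fix n
    have m: "\<sigma> n powr q \<le> Mx powr q" using \<sigma>0[of n] pq p1 by (intro powr_mono2) auto
    have "Cw n = \<sigma> n powr q * Cu n" using \<sigma>0[of n] by (simp add: Cw_def Cu_def wsig abs_mult powr_mult)
    then show "\<bar>Cw n\<bar> \<le> Mx powr q * Cu n" using m Cunn[of n] \<sigma>0[of n] by (simp add: mult_right_mono)
  qed
  have Ews: "E_term p a b w summable_on UNIV"
  proof (rule real_summable_comp)
    show "(\<lambda>n. Mx powr p * E_term p a b u n) summable_on UNIV" by (intro summable_on_cmult_right uE)
    fix n
    define X where "X = pos_part u (n+1) - pos_part u n"
    define Y where "Y = neg_part u (n+1) - neg_part u n"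
    have XY: "X * Y \<ge> 0" unfolding X_def Y_def pos_part_def neg_part_def
      by (cases "u n \<le> 0"; cases "u (n+1) \<le> 0") (auto simp: zero_le_mult_iff mult_nonneg_nonpos mult_nonpos_nonneg)
    have fu: "fdiff u n = X + Y" by (auto simp: X_def Y_def fdiff_def pos_part_def neg_part_def)
    have fw: "fdiff w n = s * X + t * Y" by (auto simp: X_def Y_def fdiff_def w_def algebra_simps)
    have "\<bar>fdiff w n\<bar> \<le> s * \<bar>X\<bar> + t * \<bar>Y\<bar>" unfolding fw using s0 t0
      by (metis abs_mult abs_of_nonneg abs_triangle_ineq)
    also have "\<dots> \<le> Mx * \<bar>X\<bar> + Mx * \<bar>Y\<bar>" using s0 t0 by (intro add_mono mult_right_mono) (auto simp: Mx_def)
    also have "\<dots> = Mx * \<bar>fdiff u n\<bar>" unfolding fu abs_same_sign[OF XY, symmetric] by (simp add: algebra_simps)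
    finally have "\<bar>fdiff w n\<bar> powr p \<le> (Mx * \<bar>fdiff u n\<bar>) powr p" using p1 by (intro powr_mono2) auto
    then have d: "\<bar>fdiff w n\<bar> powr p \<le> Mx powr p * \<bar>fdiff u n\<bar> powr p" using Mx0 by (simp add: powr_mult)
    have "\<bar>w n\<bar> powr p \<le> (Mx * \<bar>u n\<bar>) powr p" using p1 \<sigma>0[of n] unfolding wsig abs_mult
      by (intro powr_mono2 mult_right_mono) auto
    then have e: "\<bar>w n\<bar> powr p \<le> Mx powr p * \<bar>u n\<bar> powr p" using Mx0 by (simp add: powr_mult)
    have "E_term p a b w n \<le> a n * (Mx powr p * \<bar>fdiff u n\<bar> powr p) + b n * (Mx powr p * \<bar>u n\<bar> powr p)"
      unfolding E_term_def using d e apos[of n] bpos[of n] by (intro add_mono mult_left_mono) auto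
    moreover have "a n * (Mx powr p * \<bar>fdiff u n\<bar> powr p) + b n * (Mx powr p * \<bar>u n\<bar> powr p) = Mx powr p * E_term p a b u n"
      by (simp add: E_term_def algebra_simps)
    ultimately show "\<bar>E_term p a b w n\<bar> \<le> Mx powr p * E_term p a b u n" using Enn[of w n] by simp
  qed
  define Dab where "Dab = (\<lambda>v n. a n * \<bar>fdiff u n\<bar> powr (p - 2) * fdiff u n * fdiff v n
              + b n * \<bar>u n\<bar> powr (p - 2) * u n * v n)"
  define Dc where "Dc = (\<lambda>v n. c n * \<bar>u n\<bar> powr (q - 2) * u n * v n * ln (\<bar>u n\<bar> powr r))"
  have dI: "deriv_I p q r a b c u v = infsum (Dab v) UNIV - infsum (Dc v) UNIV" for v
    by (simp add: deriv_I_def Dab_def Dc_def)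
  have Ds: "Dab v summable_on UNIV \<and> Dc v summable_on UNIV"
    if v1: "\<And>n. \<bar>fdiff v n\<bar> \<le> \<bar>fdiff u n\<bar>" and v2: "\<And>n. \<bar>v n\<bar> \<le> \<bar>u n\<bar>"
      and v3: "\<And>n. v n \<noteq> 0 \<Longrightarrow> v n = u n" for v
  proof
    show "Dab v summable_on UNIV"
    proof (rule real_summable_comp[OF uE])
      fix n
      have "\<bar>Dab v n\<bar> \<le> a n * \<bar>\<bar>fdiff u n\<bar> powr (p - 2) * fdiff u n * fdiff v n\<bar>
          + b n * \<bar>\<bar>u n\<bar> powr (p - 2) * u n * v n\<bar>"
      proof -
        have "Dab v n = a n * (\<bar>fdiff u n\<bar> powr (p - 2) * fdiff u n * fdiff v n)
          + b n * (\<bar>u n\<bar> powr (p - 2) * u n * v n)" by (simp add: Dab_def mult.assoc)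
        then show ?thesis using apos[of n] bpos[of n]
          abs_triangle_ineq[of "a n * (\<bar>fdiff u n\<bar> powr (p - 2) * fdiff u n * fdiff v n)" "b n * (\<bar>u n\<bar> powr (p - 2) * u n * v n)"]
          by (simp add: abs_mult)
      qed
      also have "\<dots> \<le> a n * \<bar>fdiff u n\<bar> powr p + b n * \<bar>u n\<bar> powr p"
        using apos[of n] bpos[of n] dterm_bound[OF v1[of n], of p] dterm_bound[OF v2[of n], of p]
        by (intro add_mono mult_left_mono) auto
      finally show "\<bar>Dab v n\<bar> \<le> E_term p a b u n" by (simp add: E_term_def)
    qed
    show "Dc v summable_on UNIV"
    proof (rule real_summable_comp[OF abs_summable_real[OF uL]])
      fix n
      show "\<bar>Dc v n\<bar> \<le> \<bar>log_term q r c u n\<bar>"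
      proof (cases "v n = 0")
        case True then show ?thesis by (simp add: Dc_def)
      next
        case False
        then have "v n = u n" "u n \<noteq> 0" using v3 by auto
        then have "Dc v n = log_term q r c u n"
          unfolding Dc_def log_term_def using sq_aux[of "u n" q] by (simp add: mult.assoc mult.left_commute)
        then show ?thesis by simp
      qed
    qed
  qed
  have DP: "Dab (pos_part u) summable_on UNIV \<and> Dc (pos_part u) summable_on UNIV"
    by (rule Ds) (auto simp: fdiff_def pos_part_def)
  have DN: "Dab (neg_part u) summable_on UNIV \<and> Dc (neg_part u) summable_on UNIV"
    by (rule Ds) (auto simp: fdiff_def neg_part_def)
  define As where "As = (1 - s powr q) / q"
  define At where "At = (1 - t powr q) / q"
  have Iu: "functional_I p q r a b c u = 1/p * infsum (E_term p a b u) UNIV + r/q\<^sup>2 * infsum Cu UNIV - 1/q * infsum (log_term q r c u) UNIV"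
    by (simp add: functional_I_def normE Cu_def)
  have Iw: "functional_I p q r a b c w = 1/p * infsum (E_term p a b w) UNIV + r/q\<^sup>2 * infsum Cw UNIV - 1/q * infsum (log_term q r c w) UNIV"
    by (simp add: functional_I_def normE Cw_def)
  have D1: "infsum (Dab (pos_part u)) UNIV - infsum (Dc (pos_part u)) UNIV = 0" using d1 dI by simp
  have D2: "infsum (Dab (neg_part u)) UNIV - infsum (Dc (neg_part u)) UNIV = 0" using d2 dI by simp
  have HU: "((\<lambda>n. 1/p * E_term p a b u n + r/q\<^sup>2 * Cu n - 1/q * log_term q r c u n) has_sum
      (1/p * infsum (E_term p a b u) UNIV + r/q\<^sup>2 * infsum Cu UNIV - 1/q * infsum (log_term q r c u) UNIV)) UNIV"
    by (intro has_sum_diff has_sum_add has_sum_cmult_right has_sum_infsum uE uL Cus)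
  have HW: "((\<lambda>n. 1/p * E_term p a b w n + r/q\<^sup>2 * Cw n - 1/q * log_term q r c w n) has_sum
      (1/p * infsum (E_term p a b w) UNIV + r/q\<^sup>2 * infsum Cw UNIV - 1/q * infsum (log_term q r c w) UNIV)) UNIV"
    by (intro has_sum_diff has_sum_add has_sum_cmult_right has_sum_infsum Ews Lws Cws)
  have HP: "((\<lambda>n. As * (Dab (pos_part u) n - Dc (pos_part u) n)) has_sum
      (As * (infsum (Dab (pos_part u)) UNIV - infsum (Dc (pos_part u)) UNIV))) UNIV"
    using DP by (intro has_sum_diff has_sum_cmult_right has_sum_infsum) auto
  have HN: "((\<lambda>n. At * (Dab (neg_part u) n - Dc (neg_part u) n)) has_sum
      (At * (infsum (Dab (neg_part u)) UNIV - infsum (Dc (neg_part u)) UNIV))) UNIV"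
    using DN by (intro has_sum_diff has_sum_cmult_right has_sum_infsum) auto
  note HS = has_sum_diff[OF has_sum_diff[OF has_sum_diff[OF HU HW] HP] HN]
  have "0 \<le> 1/p * infsum (E_term p a b u) UNIV + r/q\<^sup>2 * infsum Cu UNIV - 1/q * infsum (log_term q r c u) UNIV -
      (1/p * infsum (E_term p a b w) UNIV + r/q\<^sup>2 * infsum Cw UNIV - 1/q * infsum (log_term q r c w) UNIV) -
      As * (infsum (Dab (pos_part u)) UNIV - infsum (Dc (pos_part u)) UNIV) -
      At * (infsum (Dab (neg_part u)) UNIV - infsum (Dc (neg_part u)) UNIV)"
  proof (rule has_sum_nonneg[OF HS])
    fix n
    have P: "0 \<le> (a n * \<bar>u (n+1) - u n\<bar> powr p + b n * \<bar>u n\<bar> powr p) / p + r/q\<^sup>2 * (c n * \<bar>u n\<bar> powr q) - (c n * \<bar>u n\<bar> powr q * ln(\<bar>u n\<bar> powr r)) / q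
    - ((a n * \<bar>(s * max (u (n+1)) 0 + t * min (u (n+1)) 0) - (s * max (u n) 0 + t * min (u n) 0)\<bar> powr p + b n * \<bar>s * max (u n) 0 + t * min (u n) 0\<bar> powr p) / p + r/q\<^sup>2 * (c n * \<bar>s * max (u n) 0 + t * min (u n) 0\<bar> powr q) - (c n * \<bar>s * max (u n) 0 + t * min (u n) 0\<bar> powr q * ln(\<bar>s * max (u n) 0 + t * min (u n) 0\<bar> powr r)) / q)
    - (1 - s powr q)/q * ((a n * \<bar>u (n+1) - u n\<bar> powr (p-2) * (u (n+1) - u n) * (max (u (n+1)) 0 - max (u n) 0) + b n * \<bar>u n\<bar> powr (p-2) * u n * max (u n) 0)
         - c n * \<bar>u n\<bar> powr (q-2) * u n * max (u n) 0 * ln(\<bar>u n\<bar> powr r))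
    - (1 - t powr q)/q * ((a n * \<bar>u (n+1) - u n\<bar> powr (p-2) * (u (n+1) - u n) * (min (u (n+1)) 0 - min (u n) 0) + b n * \<bar>u n\<bar> powr (p-2) * u n * min (u n) 0)
         - c n * \<bar>u n\<bar> powr (q-2) * u n * min (u n) 0 * ln(\<bar>u n\<bar> powr r))"
      using pt[where p=p and q=q and r=r and s=s and t=t and x="u n" and y="u (n+1)" and an="a n" and bn="b n" and cn="c n"] p1 pq r1 s0 t0 apos[of n] bpos[of n] cpos[of n]
      by (simp del: ln_powr)
    show "0 \<le> 1/p * E_term p a b u n + r/q\<^sup>2 * Cu n - 1/q * log_term q r c u n -
      (1/p * E_term p a b w n + r/q\<^sup>2 * Cw n - 1/q * log_term q r c w n) -
      As * (Dab (pos_part u) n - Dc (pos_part u) n) -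
      At * (Dab (neg_part u) n - Dc (neg_part u) n)"
      using P unfolding E_term_def Cu_def Cw_def log_term_def Dab_def Dc_def fdiff_def w_def pos_part_def neg_part_def As_def At_def
      by (simp del: ln_powr add: algebra_simps add_divide_distrib diff_divide_distrib)
  qed
  then show ?thesis unfolding w_def[symmetric] Iu Iw D1 D2 by simp

qed


theorem corollary2p4:
  fixes p q r :: real and a b c :: "int \<Rightarrow> real"
  assumes "1 < p" and "p < q" and "p / 2 \<in> \<nat>" and "r \<ge> 1"
    and "\<And>n. a n > 0" and "\<And>n. b n > 0" and "\<And>n. c n > 0"
    and C1: "\<exists>b0 > 0. \<forall>n. b n \<ge> b0"
            "filterlim b at_top at_top" "filterlim b at_top at_bot"
    and C2: "\<exists>c0 > 0. \<forall>n. c n \<le> c0" "c summable_on UNIV"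
    and "u \<in> nehari_M p q r a b c"
  shows "functional_I p q r a b c u
           = (GREATEST x. \<exists>s t. s \<ge> 0 \<and> t \<ge> 0 \<and>
                 x = functional_I p q r a b c (\<lambda>n. s * pos_part u n + t * neg_part u n))
      \<and> (\<forall>s t. s \<ge> 0 \<longrightarrow> t \<ge> 0 \<longrightarrow>
             functional_I p q r a b c (\<lambda>n. s * pos_part u n + t * neg_part u n)
               \<le> functional_I p q r a b c u)"
proof -
  obtain b0 where b0: "b0 > 0" "\<And>n. b n \<ge> b0" using C1(1) by blast
  have ineq: "\<forall>s t. s \<ge> 0 \<longrightarrow> t \<ge> 0 \<longrightarrow>
             functional_I p q r a b c (\<lambda>n. s * pos_part u n + t * neg_part u n)
               \<le> functional_I p q r a b c u"
    using main_ineq[OF assms(1,2,4,5,6,7) b0 C2(2) assms(13)] by blast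
  have e1: "(\<lambda>n. pos_part u n + neg_part u n) = u"
    by (rule ext) (simp add: pos_part_def neg_part_def)
  have "(GREATEST x. \<exists>s t. s \<ge> 0 \<and> t \<ge> 0 \<and>
                 x = functional_I p q r a b c (\<lambda>n. s * pos_part u n + t * neg_part u n))
        = functional_I p q r a b c u"
  proof (rule Greatest_equality)
    show "\<exists>s t. s \<ge> 0 \<and> t \<ge> 0 \<and>
        functional_I p q r a b c u = functional_I p q r a b c (\<lambda>n. s * pos_part u n + t * neg_part u n)"
      by (rule exI[of _ 1], rule exI[of _ 1]) (simp add: e1)
  next
    fix y assume "\<exists>s t. s \<ge> 0 \<and> t \<ge> 0 \<and>
                 y = functional_I p q r a b c (\<lambda>n. s * pos_part u n + t * neg_part u n)"
    then show "y \<le> functional_I p q r a b c u" using ineq by blast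
  qed
  then show ?thesis using ineq by simp
qed

end
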